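(* Let $G$ be a graph, $\boldsymbol{\gamma}\in\mathbb{N}_{\ge0}^{V(G)}$ any vector, $R\in\mathbb{N}_{\ge0}$ and $\phi,\psi\in(0,1)$. If there exists a graph $W$ with embedding $\Pi_{W\mapsto G}$ that is an $(R,\phi,\psi)$-witness of $(G,\boldsymbol{0})$ with respect to $\boldsymbol{\gamma}$, then $G$ is a $\psi^2\phi$-expander.
   Context: Graphs are directed unweighted multigraphs (self-loops allowed); $\deg_G(v)$ counts incident edges with a self-loop counting $2$; $\mathrm{vol}_G(S)=\sum_{v\in S}\deg_G(v)$; for $S\subseteq V$, $\overline{S}=V\setminus S$, $E_G(S,\overline{S})$ is the set of edges with tail in $S$ and head in $\overline{S}$; $\overleftarrow{G}$ is $G$ with edges reversed; for a vector $\boldsymbol{r}$, $\boldsymbol{r}(S)=\sum_{s\in S}\boldsymbol{r}(s)$. A cut $(S,\overline{S})$ is $\phi$-out-sparse if $\mathrm{vol}_G(S)\le\mathrm{vol}_G(\overline{S})$ and $|E_G(S,\overline{S})|<\phi\,\mathrm{vol}_G(S)$; $G$ is a $\phi$-expander if neither $G$ nor $\overleftarrow{G}$ has a $\phi$-out-sparse cut. An embedding $\Pi_{W\mapsto G}$ of a graph $W$ on the same vertex set as $G$ maps each edge $(u,v)$ of $W$ to a $u$-to-$v$ path in $G$; its congestion is the maximum over $e\in E(G)$ of the number of edges of $W$ whose path contains $e$. Given $\boldsymbol{r},\boldsymbol{\gamma}\in\mathbb{N}_{\ge0}^{V(G)}$, $\phi,\psi\in(0,1)$, $R\in\mathbb{N}_{\ge0}$,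 $(W,\Pi_{W\mapsto G})$ is an $(R,\phi,\psi)$-out-witness of $(G,\boldsymbol{r})$ w.r.t. $\boldsymbol{\gamma}$ if (1) $\|\boldsymbol{r}\|_1\le R$; (2) for every $v$, $\deg_W(v)+\boldsymbol{r}(v)\in[\deg_G(v),\frac{1}{\psi}\deg_G(v)]$; (3) for every $S\subseteq V$ with $\boldsymbol{\gamma}(S)\le\boldsymbol{\gamma}(\overline{S})$, $|E_W(S,\overline{S})|+\boldsymbol{r}(S)\ge\psi(\mathrm{vol}_W(S)+\boldsymbol{r}(S))$; (4) $\Pi_{W\mapsto G}$ has congestion at most $\frac{1}{\psi\phi}$. It is an $(R,\phi,\psi)$-witness if moreover $\overleftarrow{W}$ (with the reversed paths) is an $(R,\phi,\psi)$-out-witness of $(\overleftarrow{G},\boldsymbol{r})$ w.r.t. $\boldsymbol{\gamma}$. *)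

theory Defs
  imports "HOL-Analysis.Analysis" "Graph_Theory.Digraph" "Graph_Theory.Arc_Walk"
begin

definition deg :: "('a,'b) pre_digraph \<Rightarrow> 'a \<Rightarrow> nat" where
  "deg G v = in_degree G v + out_degree G v"   (* a self-loop counts 2 *)

definition vol :: "('a,'b) pre_digraph \<Rightarrow> 'a set \<Rightarrow> nat" where
  "vol G S = (\<Sum>v\<in>S. deg G v)"

definition cut_arcs :: "('a,'b) pre_digraph \<Rightarrow> 'a set \<Rightarrow> 'b set" where
  "cut_arcs G S = {e \<in> arcs G. tail G e \<in> S \<and> head G e \<in> verts G - S}"

definition rev_graph :: "('a,'b) pre_digraph \<Rightarrow> ('a,'b) pre_digraph" where
  "rev_graph G = \<lparr>verts = verts G, arcs = arcs G, tail = head G, head = tail G\<rparr>"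

definition out_sparse_cut :: "('a,'b) pre_digraph \<Rightarrow> real \<Rightarrow> 'a set \<Rightarrow> bool" where
  "out_sparse_cut G \<phi> S \<longleftrightarrow> S \<subseteq> verts G \<and> vol G S \<le> vol G (verts G - S)
     \<and> real (card (cut_arcs G S)) < \<phi> * real (vol G S)"

definition is_expander :: "('a,'b) pre_digraph \<Rightarrow> real \<Rightarrow> bool" where
  "is_expander G \<phi> \<longleftrightarrow> (\<nexists>S. out_sparse_cut G \<phi> S) \<and> (\<nexists>S. out_sparse_cut (rev_graph G) \<phi> S)"

definition is_embedding ::
    "('a,'f) pre_digraph \<Rightarrow> ('a,'e) pre_digraph \<Rightarrow> ('f \<Rightarrow> 'e list) \<Rightarrow> bool" where
  "is_embedding W G Pi_emb \<longleftrightarrow> verts W = verts G \<and>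
     (\<forall>f\<in>arcs W. pre_digraph.apath G (tail W f) (Pi_emb f) (head W f))"

definition congestion ::
    "('a,'f) pre_digraph \<Rightarrow> ('a,'e) pre_digraph \<Rightarrow> ('f \<Rightarrow> 'e list) \<Rightarrow> nat" where
  "congestion W G Pi_emb = Max ({card {f \<in> arcs W. e \<in> set (Pi_emb f)} | e. e \<in> arcs G} \<union> {0})"

definition out_witness ::
    "('a,'e) pre_digraph \<Rightarrow> ('a \<Rightarrow> nat) \<Rightarrow> ('a \<Rightarrow> nat) \<Rightarrow> nat \<Rightarrow> real \<Rightarrow> real
     \<Rightarrow> ('a,'f) pre_digraph \<Rightarrow> ('f \<Rightarrow> 'e list) \<Rightarrow> bool" where
  "out_witness G r \<gamma> R \<phi> \<psi> W Pi_emb \<longleftrightarrow>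
     is_embedding W G Pi_emb \<and>
     (\<Sum>v\<in>verts G. r v) \<le> R \<and>
     (\<forall>v\<in>verts G. deg G v \<le> deg W v + r v \<and> real (deg W v + r v) \<le> real (deg G v) / \<psi>) \<and>
     (\<forall>S\<subseteq>verts G. sum \<gamma> S \<le> sum \<gamma> (verts G - S) \<longrightarrow>
        real (card (cut_arcs W S)) + real (sum r S) \<ge> \<psi> * (real (vol W S) + real (sum r S))) \<and>
     real (congestion W G Pi_emb) \<le> 1 / (\<psi> * \<phi>)"

definition witness ::
    "('a,'e) pre_digraph \<Rightarrow> ('a \<Rightarrow> nat) \<Rightarrow> ('a \<Rightarrow> nat) \<Rightarrow> nat \<Rightarrow> real \<Rightarrow> real
     \<Rightarrow> ('a,'f) pre_digraph \<Rightarrow> ('f \<Rightarrow> 'e list) \<Rightarrow> bool" where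
  "witness G r \<gamma> R \<phi> \<psi> W Pi_emb \<longleftrightarrow>
     out_witness G r \<gamma> R \<phi> \<psi> W Pi_emb \<and>
     out_witness (rev_graph G) r \<gamma> R \<phi> \<psi> (rev_graph W) (\<lambda>f. rev (Pi_emb f))"

end

theory Submission
  imports Defs
begin

lemma cas_cut:
  assumes "wf_digraph G"
  shows "pre_digraph.cas G u p v \<Longrightarrow> set p \<subseteq> arcs G \<Longrightarrow> u \<in> S \<Longrightarrow> v \<notin> S \<Longrightarrow> v \<in> verts G
    \<Longrightarrow> \<exists>e\<in>set p. e \<in> cut_arcs G S"
proof (induction p arbitrary: u)
  case Nil
  then show ?case by (simp add: pre_digraph.cas.simps)
next
  case (Cons e es)
  have t: "tail G e = u" and c: "pre_digraph.cas G (head G e) es v"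
    using Cons.prems(1) by (simp_all add: pre_digraph.cas.simps)
  have hv: "head G e \<in> verts G" using Cons.prems(2) assms wf_digraph.head_in_verts by fastforce
  show ?case
  proof (cases "head G e \<in> S")
    case True
    then show ?thesis using Cons.IH[OF c] Cons.prems by auto
  next
    case False
    then have "e \<in> cut_arcs G S" using t Cons.prems hv unfolding cut_arcs_def by auto
    then show ?thesis by auto
  qed
qed

lemma deg_rev: "deg (rev_graph G) v = deg G v"
  unfolding deg_def rev_graph_def in_degree_def out_degree_def in_arcs_def out_arcs_def by simp

lemma vol_rev: "vol (rev_graph G) S = vol G S"
  unfolding vol_def by (simp add: deg_rev)

lemma rev_rev: "rev_graph (rev_graph G) = G"
  unfolding rev_graph_def by simp

lemma fin_rev: "fin_digraph G \<Longrightarrow> fin_digraph (rev_graph G)"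
  unfolding fin_digraph_def fin_digraph_axioms_def wf_digraph_def rev_graph_def by auto

lemma cut_count:
  assumes fG: "fin_digraph G" and emb: "is_embedding W G P" and fW: "fin_digraph W"
    and S: "S \<subseteq> verts G"
  shows "card (cut_arcs W S) \<le> congestion W G P * card (cut_arcs G S)"
proof -
  have wfG: "wf_digraph G" using fG fin_digraph_def by blast
  have finW: "finite (arcs W)" using fW fin_digraph.finite_arcs by blast
  have finG: "finite (arcs G)" using fG fin_digraph.finite_arcs by blast
  have wfW: "wf_digraph W" using fW fin_digraph_def by blast
  have sub: "cut_arcs W S \<subseteq> (\<Union>e\<in>cut_arcs G S. {f \<in> arcs W. e \<in> set (P f)})"
  proof
    fix f assume f: "f \<in> cut_arcs W S"
    then have fa: "f \<in> arcs W" and tS: "tail W f \<in> S" and hS: "head W f \<in> verts W - S"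
      unfolding cut_arcs_def by auto
    have ap: "pre_digraph.apath G (tail W f) (P f) (head W f)" using emb fa unfolding is_embedding_def by auto
    then have "pre_digraph.awalk G (tail W f) (P f) (head W f)" by (simp add: pre_digraph.apath_def)
    then have c: "pre_digraph.cas G (tail W f) (P f) (head W f)" and ss: "set (P f) \<subseteq> arcs G"
      by (simp_all add: pre_digraph.awalk_def)
    have "verts W = verts G" using emb unfolding is_embedding_def by auto
    then obtain e where "e \<in> set (P f)" "e \<in> cut_arcs G S"
      using cas_cut[OF wfG c ss tS] hS by auto
    then show "f \<in> (\<Union>e\<in>cut_arcs G S. {f \<in> arcs W. e \<in> set (P f)})" using fa by auto
  qed
  have fincut: "finite (cut_arcs G S)" using finG unfolding cut_arcs_def by auto
  have fincut: "finite (cut_arcs G S)" using finG unfolding cut_arcs_def by auto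
  have "card (cut_arcs W S) \<le> card (\<Union>e\<in>cut_arcs G S. {f \<in> arcs W. e \<in> set (P f)})"
    by (rule card_mono) (use finW sub fincut in auto)
  also have "\<dots> \<le> (\<Sum>e\<in>cut_arcs G S. card {f \<in> arcs W. e \<in> set (P f)})"
    by (rule card_UN_le[OF fincut])
  also have "\<dots> \<le> (\<Sum>e\<in>cut_arcs G S. congestion W G P)"
  proof (rule sum_mono)
    fix e assume e: "e \<in> cut_arcs G S"
    then have ea: "e \<in> arcs G" unfolding cut_arcs_def by auto
    have fin: "finite ({card {f \<in> arcs W. e \<in> set (P f)} | e. e \<in> arcs G} \<union> {0::nat})"
      using finG by simp
    show "card {f \<in> arcs W. e \<in> set (P f)} \<le> congestion W G P"
      unfolding congestion_def by (rule Max_ge[OF fin]) (use ea in blast)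
  qed
  also have "\<dots> = congestion W G P * card (cut_arcs G S)" by simp
  finally show ?thesis .
qed

lemma one_side:
  assumes fG: "fin_digraph G" and fW: "fin_digraph W"
    and ph: "0 < \<phi>" and ps: "0 < \<psi>"
    and w1: "out_witness G (\<lambda>_. 0) \<gamma> R \<phi> \<psi> W P"
    and w2: "out_witness (rev_graph G) (\<lambda>_. 0) \<gamma> R \<phi> \<psi> (rev_graph W) Q"
  shows "\<not> out_sparse_cut G (\<psi>^2 * \<phi>) S"
proof
  assume sp: "out_sparse_cut G (\<psi>^2 * \<phi>) S"
  then have S: "S \<subseteq> verts G" and vS: "vol G S \<le> vol G (verts G - S)"
    and lt: "real (card (cut_arcs G S)) < \<psi>^2 * \<phi> * real (vol G S)"
    unfolding out_sparse_cut_def by auto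
  have emb: "is_embedding W G P" and degs: "\<forall>v\<in>verts G. deg G v \<le> deg W v"
    and c3: "\<forall>S\<subseteq>verts G. sum \<gamma> S \<le> sum \<gamma> (verts G - S) \<longrightarrow>
        real (card (cut_arcs W S)) \<ge> \<psi> * real (vol W S)"
    and cong: "real (congestion W G P) \<le> 1 / (\<psi> * \<phi>)"
    using w1 unfolding out_witness_def by auto
  have c3r: "\<forall>T\<subseteq>verts G. sum \<gamma> T \<le> sum \<gamma> (verts G - T) \<longrightarrow>
        real (card (cut_arcs (rev_graph W) T)) \<ge> \<psi> * real (vol (rev_graph W) T)"
    using w2 unfolding out_witness_def by (auto simp: rev_graph_def)
  have vW: "verts W = verts G" using emb unfolding is_embedding_def by auto
  have wfW: "wf_digraph W" using fW fin_digraph_def by blast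
  have volmono: "\<And>T. T \<subseteq> verts G \<Longrightarrow> vol G T \<le> vol W T"
    unfolding vol_def using degs by (meson subsetD sum_mono)
  have key: "real (card (cut_arcs W S)) \<ge> \<psi> * real (vol G S)"
  proof (cases "sum \<gamma> S \<le> sum \<gamma> (verts G - S)")
    case True
    then have "real (card (cut_arcs W S)) \<ge> \<psi> * real (vol W S)" using c3 S by auto
    moreover have "real (vol G S) \<le> real (vol W S)" using volmono[OF S] by simp
    ultimately show ?thesis using ps by (smt (verit) mult_left_mono)
  next
    case False
    have eq: "verts G - (verts G - S) = S" using S by auto
    have "sum \<gamma> (verts G - S) \<le> sum \<gamma> (verts G - (verts G - S))" using False eq by simp
    then have a: "real (card (cut_arcs (rev_graph W) (verts G - S))) \<ge> \<psi> * real (vol W (verts G - S))"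
      using c3r by (auto simp: vol_rev)
    have ce: "cut_arcs (rev_graph W) (verts G - S) = cut_arcs W S"
      unfolding cut_arcs_def rev_graph_def using vW S wf_digraph.tail_in_verts[OF wfW]
        wf_digraph.head_in_verts[OF wfW] by auto
    have "real (vol G S) \<le> real (vol W (verts G - S))"
      using vS volmono[of "verts G - S"] by simp
    then show ?thesis using a ce ps by (smt (verit) mult_left_mono)
  qed
  have cnt: "real (card (cut_arcs W S)) \<le> real (congestion W G P) * real (card (cut_arcs G S))"
    using cut_count[OF fG emb fW S] by (metis of_nat_le_iff of_nat_mult)
  have pp: "0 < \<psi> * \<phi>" using ps ph by simp
  have cg: "real (congestion W G P) * (\<psi> * \<phi>) \<le> 1" using cong pp by (simp add: field_simps)
  have "\<psi> * \<phi> * real (card (cut_arcs W S)) \<le> \<psi> * \<phi> * (real (congestion W G P) * real (card (cut_arcs G S)))"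
    using cnt pp by (simp add: mult_left_mono)
  also have "\<dots> = (real (congestion W G P) * (\<psi> * \<phi>)) * real (card (cut_arcs G S))" by simp
  also have "\<dots> \<le> real (card (cut_arcs G S))" using cg mult_right_mono[OF cg, of "real (card (cut_arcs G S))"] by simp
  finally have b: "\<psi> * \<phi> * real (card (cut_arcs W S)) \<le> real (card (cut_arcs G S))" .
  have "\<psi>^2 * \<phi> * real (vol G S) = \<psi> * \<phi> * (\<psi> * real (vol G S))" by (simp add: power2_eq_square)
  also have "\<dots> \<le> \<psi> * \<phi> * real (card (cut_arcs W S))" using key pp by (simp add: mult_left_mono)
  finally show False using b lt by simp
qed

theorem mainTheorem2:
  fixes G :: "('a,'e) pre_digraph" and \<gamma> :: "'a \<Rightarrow> nat" and R :: nat and \<phi> \<psi> :: real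
  assumes "fin_digraph G"
    and "0 < \<phi>" "\<phi> < 1" "0 < \<psi>" "\<psi> < 1"
    and "\<exists>(W :: ('a,'f) pre_digraph) Pi_emb. fin_digraph W \<and> witness G (\<lambda>_. 0) \<gamma> R \<phi> \<psi> W Pi_emb"
  shows "is_expander G (\<psi>^2 * \<phi>)"
proof -
  obtain W :: "('a,'f) pre_digraph" and P where fW: "fin_digraph W"
    and w: "witness G (\<lambda>_. 0) \<gamma> R \<phi> \<psi> W P" using assms(6) by blast
  have w1: "out_witness G (\<lambda>_. 0) \<gamma> R \<phi> \<psi> W P"
    and w2: "out_witness (rev_graph G) (\<lambda>_. 0) \<gamma> R \<phi> \<psi> (rev_graph W) (\<lambda>f. rev (P f))"
    using w unfolding witness_def by auto
  have w1': "out_witness (rev_graph (rev_graph G)) (\<lambda>_. 0) \<gamma> R \<phi> \<psi> (rev_graph (rev_graph W)) P"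
    using w1 by (simp add: rev_rev)
  show ?thesis unfolding is_expander_def
    using one_side[OF assms(1) fW assms(2) assms(4) w1 w2]
      one_side[OF fin_rev[OF assms(1)] fin_rev[OF fW] assms(2) assms(4) w2 w1'] by blast
qed

end
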